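(* Let $a=p^\gamma$ with $p$ an odd prime and $\gamma\ge1$; write $\phi(a)=2^m d$ with $d$ odd (so $m\ge1$), let $G=(\mathbb{Z}/a\mathbb{Z})^*$ and let $H$ be the maximal subgroup of $G$ of odd order. Let $n$ be a positive integer with $\gcd(n,a)=1$. Let $\mathcal{P}$ be the sequence of prime factors of $n$ counted with multiplicity, let $\mathcal{T}$ be the subsequence of those primes $r$ in $\mathcal{P}$ with $r\bmod a\notin H$, and let $t$ be the length of $\mathcal{T}$. Suppose that the set of residues modulo $a$ of the elements of $\mathcal{P}$ contains $H$. (i) If $t\ge 2^{m-1}$, then $n\notin\mathcal{E}^*_a$. (ii) Fix a primitive root $g$ modulo $p^\gamma$. If $t=2^{m-1}-1$, then $n\in\mathcal{E}^*_a$ if and only if there exists an odd integer $e$ such that every prime $r$ in $\mathcal{T}$ satisfies $r\equiv g^{e'}\pmod{p^\gamma}$ for some integer $e'$ with $e'\equiv e$ or $e'\equiv -e\pmod{2^m}$.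
   Context: For a positive integer $n$, let $R(n;a)$ be the number of pairs $(x,y)$ of positive integers with $\frac{a}{n}=\frac1x+\frac1y$, and $\mathcal{E}^*_a=\{n\in\mathbb{N}:R(n;a)=0,\ \gcd(n,a)=1\}$. *)

theory Defs
  imports "HOL-Number_Theory.Number_Theory"
begin

definition R :: "nat \<Rightarrow> nat \<Rightarrow> nat" where
  "R n a = card {(x :: nat, y :: nat). x > 0 \<and> y > 0 \<and>
                  real a / real n = 1 / real x + 1 / real y}"

definition E_star :: "nat \<Rightarrow> nat set" where
  "E_star a = {n. n > 0 \<and> R n a = 0 \<and> gcd n a = 1}"

definition unit_group :: "nat \<Rightarrow> int monoid" where
  "unit_group a = units_of (residue_ring (int a))"

end

theory Submission
  imports Defs
begin

lemma ug_facts: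
  assumes "a > 1"
  shows "carrier (unit_group a) = {x. 0 < x \<and> x < int a \<and> coprime x (int a)}"
    and "\<And>x n. x \<in> carrier (unit_group a) \<Longrightarrow> x [^]\<^bsub>unit_group a\<^esub> (n::nat) = x ^ n mod int a"
    and "comm_group (unit_group a)"
    and "order (unit_group a) = totient a"
    and "\<one>\<^bsub>unit_group a\<^esub> = 1"
proof -
  interpret R: residues "int a" "residue_ring (int a)"
    using assms by (simp add: residues_def)
  show c: "carrier (unit_group a) = {x. 0 < x \<and> x < int a \<and> coprime x (int a)}"
    by (simp add: unit_group_def units_of_carrier R.res_units_eq)
  show "\<And>x n. x \<in> carrier (unit_group a) \<Longrightarrow> x [^]\<^bsub>unit_group a\<^esub> (n::nat) = x ^ n mod int a"
  proof -
    fix x n assume "x \<in> carrier (unit_group a)"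
    hence x: "x \<in> Units (residue_ring (int a))" and "x mod int a = x"
      using c by (auto simp: unit_group_def units_of_carrier)
    then show "x [^]\<^bsub>unit_group a\<^esub> (n::nat) = x ^ n mod int a"
      using R.units_of_pow[OF x, of n] R.pow_cong[of x n] by (simp add: unit_group_def)
  qed
  show "comm_group (unit_group a)"
    by (simp add: unit_group_def R.units_comm_group)
  show "order (unit_group a) = totient a"
    using R.totient_eq by (simp add: order_def unit_group_def units_of_carrier)
  show "\<one>\<^bsub>unit_group a\<^esub> = 1"
    by (simp add: unit_group_def units_of_one R.res_one_eq)
qed

lemma K_subgroup:
  assumes "a > 1"
  shows "subgroup {x \<in> carrier (unit_group a). x [^]\<^bsub>unit_group a\<^esub> (d::nat) = \<one>\<^bsub>unit_group a\<^esub>} (unit_group a)"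
proof -
  interpret G: comm_group "unit_group a" using ug_facts(3)[OF assms] .
  show ?thesis
  proof (rule G.subgroupI)
    show "{x \<in> carrier (unit_group a). x [^]\<^bsub>unit_group a\<^esub> d = \<one>\<^bsub>unit_group a\<^esub>} \<noteq> {}"
      using G.one_closed G.nat_pow_one by blast
  next
    fix x assume "x \<in> {x \<in> carrier (unit_group a). x [^]\<^bsub>unit_group a\<^esub> d = \<one>\<^bsub>unit_group a\<^esub>}"
    thus "inv\<^bsub>unit_group a\<^esub> x \<in> {x \<in> carrier (unit_group a). x [^]\<^bsub>unit_group a\<^esub> d = \<one>\<^bsub>unit_group a\<^esub>}"
      by (simp add: G.nat_pow_inv)
  next
    fix x y assume "x \<in> {x \<in> carrier (unit_group a). x [^]\<^bsub>unit_group a\<^esub> d = \<one>\<^bsub>unit_group a\<^esub>}"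
      "y \<in> {x \<in> carrier (unit_group a). x [^]\<^bsub>unit_group a\<^esub> d = \<one>\<^bsub>unit_group a\<^esub>}"
    thus "x \<otimes>\<^bsub>unit_group a\<^esub> y \<in> {x \<in> carrier (unit_group a). x [^]\<^bsub>unit_group a\<^esub> d = \<one>\<^bsub>unit_group a\<^esub>}"
      by (simp add: G.nat_pow_distrib)
  qed auto
qed

lemma H_pow:
  assumes "a > 1" "subgroup H (unit_group a)" "odd (card H)" "totient a = 2 ^ m * d" "x \<in> H"
  shows "x [^]\<^bsub>unit_group a\<^esub> d = \<one>\<^bsub>unit_group a\<^esub>"
proof -
  interpret G: comm_group "unit_group a" using ug_facts(3)[OF assms(1)] .
  let ?G' = "(unit_group a)\<lparr>carrier := H\<rparr>"
  have gr: "group ?G'" using subgroup.subgroup_is_group[OF assms(2)] G.is_group by blast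
  have "x [^]\<^bsub>?G'\<^esub> order ?G' = \<one>\<^bsub>?G'\<^esub>"
    using group.pow_order_eq_1[OF gr] assms(5) by simp
  hence x1: "x [^]\<^bsub>unit_group a\<^esub> card H = \<one>\<^bsub>unit_group a\<^esub>"
    by (simp add: order_def G.nat_pow_consistent[symmetric])
  have "card H dvd totient a"
    using G.lagrange[OF assms(2)] ug_facts(4)[OF assms(1)] by (metis dvd_triv_right)
  hence "card H dvd 2 ^ m * d" using assms(4) by simp
  moreover have "coprime (card H) (2 ^ m)" using assms(3) by simp
  ultimately have "card H dvd d" using coprime_dvd_mult_right_iff by blast
  then obtain k where "d = card H * k" by blast
  thus ?thesis using x1 assms(2,5)
    by (simp add: G.nat_pow_pow[symmetric] subgroup.mem_carrier)
qed

lemma carrier_pow_iff: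
  assumes "a > 1" "x \<in> carrier (unit_group a)"
  shows "x [^]\<^bsub>unit_group a\<^esub> (d::nat) = \<one>\<^bsub>unit_group a\<^esub> \<longleftrightarrow> [nat x ^ d = 1] (mod a)"
proof -
  have x0: "x > 0" using assms ug_facts(1)[OF assms(1)] by auto
  have "x [^]\<^bsub>unit_group a\<^esub> d = \<one>\<^bsub>unit_group a\<^esub> \<longleftrightarrow> x ^ d mod int a = 1"
    using ug_facts(2,5)[OF assms(1)] assms(2) by simp
  also have "\<dots> \<longleftrightarrow> int (nat x ^ d mod a) = int (1 mod a)"
    using x0 assms(1) by (simp add: of_nat_mod)
  also have "\<dots> \<longleftrightarrow> [nat x ^ d = 1] (mod a)" by (simp add: cong_def)
  finally show ?thesis .
qed

lemma nat_in_carrier: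
  assumes "a > 1" "coprime y a"
  shows "int (y mod a) \<in> carrier (unit_group a)"
proof -
  have "y mod a \<noteq> 0" using assms
    using coprime_common_divisor_nat dvd_refl mod_eq_0_iff_dvd by blast
  moreover have "coprime (y mod a) a" using assms
    by (metis coprime_commute coprime_mod_right_iff gr_implies_not0)
  ultimately show ?thesis using ug_facts(1)[OF assms(1)] assms(1) by auto
qed

lemma K_card:
  assumes a1: "a > 1" and g: "residue_primroot a g" and phi: "totient a = 2 ^ m * d" and d0: "d > 0"
  shows "card {x \<in> carrier (unit_group a). x [^]\<^bsub>unit_group a\<^esub> d = \<one>\<^bsub>unit_group a\<^esub>} = d"
proof -
  let ?K = "{x \<in> carrier (unit_group a). x [^]\<^bsub>unit_group a\<^esub> d = \<one>\<^bsub>unit_group a\<^esub>}"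
  define f where "f j = int (g ^ (2 ^ m * j) mod a)" for j
  have bij: "bij_betw (\<lambda>i. g ^ i mod a) {..<totient a} (totatives a)"
    using residue_primroot_is_generator[OF a1 g] .
  have ordg: "ord a g = totient a" and cop: "coprime a g" using g by (auto simp: residue_primroot_def)
  have lt: "2 ^ m * j < totient a" if "j < d" for j using that phi by simp
  have inj: "inj_on f {..<d}"
  proof (rule inj_onI)
    fix i j assume "i \<in> {..<d}" "j \<in> {..<d}" "f i = f j"
    hence "g ^ (2 ^ m * i) mod a = g ^ (2 ^ m * j) mod a" "2 ^ m * i \<in> {..<totient a}" "2 ^ m * j \<in> {..<totient a}"
      using lt by (auto simp: f_def)
    hence "2 ^ m * i = 2 ^ m * j" using bij unfolding bij_betw_def inj_on_def by blast
    thus "i = j" by simp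
  qed
  have "?K = f ` {..<d}"
  proof
    show "?K \<subseteq> f ` {..<d}"
    proof
      fix x assume xK: "x \<in> ?K"
      hence xc: "x \<in> carrier (unit_group a)" by simp
      hence x0: "x > 0" "x < int a" "coprime x (int a)" using ug_facts(1)[OF a1] by auto
      have xx: "int (nat x) = x" using x0 by simp
      have "coprime (int (nat x)) (int a)" using x0(3) xx by simp
      hence "coprime (nat x) a" by (simp only: coprime_int_iff)
      moreover have "nat x \<le> a" "0 < nat x" using x0 by auto
      ultimately have "nat x \<in> totatives a" unfolding totatives_def by simp
      have im: "(\<lambda>i. g ^ i mod a) ` {..<totient a} = totatives a" using bij by (rule bij_betw_imp_surj_on)
      have "nat x \<in> (\<lambda>i. g ^ i mod a) ` {..<totient a}" by (simp only: im \<open>nat x \<in> totatives a\<close>)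
      then obtain i where i0: "nat x = g ^ i mod a" "i \<in> {..<totient a}" by (rule imageE)
      have i: "i < totient a" "g ^ i mod a = nat x" using i0 by auto
      have "x [^]\<^bsub>unit_group a\<^esub> d = \<one>\<^bsub>unit_group a\<^esub>" using xK by simp
      hence "[nat x ^ d = 1] (mod a)" using carrier_pow_iff[OF a1 xc] by blast
      hence "[(g ^ i mod a) ^ d = 1] (mod a)" using i by simp
      moreover have "(g ^ i mod a) ^ d mod a = g ^ (i * d) mod a" by (simp add: power_mod power_mult)
      ultimately have "[g ^ (i * d) = 1] (mod a)" by (simp add: cong_def)
      hence "ord a g dvd i * d" using ord_divides by blast
      hence "2 ^ m * d dvd i * d" by (simp only: ordg phi)
      hence "2 ^ m dvd i" using d0 by simp
      then obtain j where j: "i = 2 ^ m * j" by blast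
      have "2 ^ m * j < 2 ^ m * d" using i(1) by (simp only: phi j)
      hence "j < d" by simp
      moreover have "f j = x" unfolding f_def using i(2) xx by (simp only: j)
      ultimately show "x \<in> f ` {..<d}" by blast
    qed
  next
    show "f ` {..<d} \<subseteq> ?K"
    proof
      fix y assume "y \<in> f ` {..<d}"
      then obtain j where j: "j < d" "y = f j" by blast
      have "g ^ (2 ^ m * j) mod a \<in> totatives a" using bij lt[OF j(1)] unfolding bij_betw_def by blast
      hence t: "0 < g ^ (2 ^ m * j) mod a" "coprime (g ^ (2 ^ m * j) mod a) a"
        by (auto simp: totatives_def)
      have cop2: "coprime (g ^ (2 ^ m * j)) a" using cop by (simp add: coprime_commute)
      have yc: "y \<in> carrier (unit_group a)"
        using nat_in_carrier[OF a1 cop2] j by (simp add: f_def)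
      have "[g ^ totient a = 1] (mod a)" using ord[of g a] ordg by simp
      hence "[(g ^ totient a) ^ j = 1] (mod a)" by (metis cong_pow power_one)
      moreover have "2 ^ m * j * d = totient a * j" using phi by simp
      moreover have "g ^ (2 ^ m * j * d) = (g ^ totient a) ^ j"
        unfolding power_mult[symmetric] using \<open>2 ^ m * j * d = totient a * j\<close> by (simp only:)
      ultimately have "[g ^ (2 ^ m * j * d) = 1] (mod a)" by (simp only:)
      moreover have "(g ^ (2 ^ m * j) mod a) ^ d mod a = g ^ (2 ^ m * j * d) mod a" by (simp add: power_mod power_mult)
      ultimately have "[(g ^ (2 ^ m * j) mod a) ^ d = 1] (mod a)" by (simp add: cong_def)
      hence "[nat y ^ d = 1] (mod a)" using j by (simp add: f_def)
      thus "y \<in> ?K" using carrier_pow_iff[OF a1 yc] yc by simp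
    qed
  qed
  thus ?thesis using inj by (simp add: card_image)
qed

lemma H_char:
  assumes a1: "a > 1" and g: "residue_primroot a g" and phi: "totient a = 2 ^ m * d" and od: "odd d"
    and Hs: "subgroup H (unit_group a)" and Ho: "odd (card H)"
    and Hm: "\<forall>K. subgroup K (unit_group a) \<and> odd (card K) \<and> H \<subseteq> K \<longrightarrow> K = H"
    and xc: "x \<in> carrier (unit_group a)"
  shows "x \<in> H \<longleftrightarrow> x [^]\<^bsub>unit_group a\<^esub> d = \<one>\<^bsub>unit_group a\<^esub>"
proof
  assume "x \<in> H" thus "x [^]\<^bsub>unit_group a\<^esub> d = \<one>\<^bsub>unit_group a\<^esub>"
    using H_pow[OF a1 Hs Ho phi] by blast
next
  assume xd: "x [^]\<^bsub>unit_group a\<^esub> d = \<one>\<^bsub>unit_group a\<^esub>"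
  let ?K = "{x \<in> carrier (unit_group a). x [^]\<^bsub>unit_group a\<^esub> d = \<one>\<^bsub>unit_group a\<^esub>}"
  have d0: "d > 0" using od by (cases d) auto
  have "subgroup ?K (unit_group a)" by (rule K_subgroup[OF a1])
  moreover have "odd (card ?K)" using K_card[OF a1 g phi d0] od by simp
  moreover have "H \<subseteq> ?K"
  proof
    fix y assume "y \<in> H"
    thus "y \<in> ?K" using H_pow[OF a1 Hs Ho phi] subgroup.mem_carrier[OF Hs] by blast
  qed
  ultimately have "?K = H" using Hm by blast
  thus "x \<in> H" using xc xd by blast
qed

lemma H_nat:
  assumes a1: "a > 1" and g: "residue_primroot a g" and phi: "totient a = 2 ^ m * d" and od: "odd d"
    and Hs: "subgroup H (unit_group a)" and Ho: "odd (card H)"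
    and Hm: "\<forall>K. subgroup K (unit_group a) \<and> odd (card K) \<and> H \<subseteq> K \<longrightarrow> K = H"
    and cop: "coprime r a" and rk: "[r = g ^ k] (mod a)"
  shows "int r mod int a \<in> H \<longleftrightarrow> 2 ^ m dvd k"
proof -
  have e: "int r mod int a = int (r mod a)" by (simp add: of_nat_mod)
  have xc: "int (r mod a) \<in> carrier (unit_group a)" using nat_in_carrier[OF a1 cop] .
  have "int r mod int a \<in> H \<longleftrightarrow> [nat (int (r mod a)) ^ d = 1] (mod a)"
    unfolding e using H_char[OF a1 g phi od Hs Ho Hm xc] carrier_pow_iff[OF a1 xc] by blast
  also have "\<dots> \<longleftrightarrow> [r ^ d = 1] (mod a)"
    by (simp add: cong_def power_mod)
  also have "\<dots> \<longleftrightarrow> [g ^ (k * d) = 1] (mod a)"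
  proof -
    have "[r ^ d = (g ^ k) ^ d] (mod a)" using rk by (rule cong_pow)
    hence "[r ^ d = g ^ (k * d)] (mod a)" by (simp only: power_mult)
    thus ?thesis using cong_sym cong_trans by metis
  qed
  also have "\<dots> \<longleftrightarrow> ord a g dvd k * d" by (rule ord_divides)
  also have "\<dots> \<longleftrightarrow> 2 ^ m * d dvd k * d"
    using g unfolding residue_primroot_def by (simp only: phi)
  also have "\<dots> \<longleftrightarrow> 2 ^ m dvd k" using od by (cases "d = 0") auto
  finally show ?thesis .
qed

lemma eq_iff_nat:
  assumes "x > 0" "y > 0" "n > 0"
  shows "real a / real n = 1 / real x + 1 / real y \<longleftrightarrow> a * x * y = n * (x + y)"
proof -
  have "real a / real n = 1 / real x + 1 / real y \<longleftrightarrow> real a * real x * real y = real n * (real x + real y)"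
    using assms by (simp add: field_simps)
  also have "\<dots> \<longleftrightarrow> real (a * x * y) = real (n * (x + y))" by simp
  also have "\<dots> \<longleftrightarrow> a * x * y = n * (x + y)" by (simp only: of_nat_eq_iff)
  finally show ?thesis .
qed

lemma bnd1:
  fixes a x y n :: nat
  assumes "a \<ge> 1" "x > 0" "y > 0" "x \<le> y" "a * x * y = n * (x + y)"
  shows "x \<le> 2 * n"
proof -
  have "x * y \<le> a * x * y" using assms(1) by simp
  also have "\<dots> = n * x + n * y" using assms(5) by (simp add: algebra_simps)
  also have "\<dots> \<le> n * y + n * y" using assms(4) by simp
  also have "\<dots> = (2 * n) * y" by simp
  finally have "x * y \<le> (2 * n) * y" .
  thus ?thesis using assms(3) by simp
qed

lemma bnd2:
  fixes a x y n :: nat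
  assumes "a \<ge> 1" "x > 0" "y > 0" "y \<le> x" "a * x * y = n * (x + y)"
  shows "x \<le> 2 * n * n"
proof -
  have y2: "y \<le> 2 * n" using bnd1[of a y x n] assms by (simp add: algebra_simps)
  have n0: "n > 0" using assms by (cases n) auto
  have "n * x < n * x + n * y" using assms(3) n0 by simp
  also have "\<dots> = x * (a * y)" using assms(5) by (simp add: algebra_simps)
  finally have "n < a * y" using assms(2) by (metis mult.commute mult_less_cancel2)
  have e: "x * (a * y - n) = n * y"
    using assms(5) by (smt (verit, ccfv_threshold) add_diff_cancel_left' diff_mult_distrib mult.assoc mult.commute)
  have "a * y - n \<ge> 1" using \<open>n < a * y\<close> by simp
  hence "x \<le> x * (a * y - n)" by simp
  also have "\<dots> = n * y" by (rule e)
  also have "\<dots> \<le> n * (2 * n)" using y2 by simp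
  finally show ?thesis by simp
qed

lemma bnd:
  fixes a x y n :: nat
  assumes "a \<ge> 1" "x > 0" "y > 0" "a * x * y = n * (x + y)"
  shows "x \<le> 2 * n * n"
proof (cases "x \<le> y")
  case True
  hence A: "x \<le> 2 * n" using bnd1 assms by blast
  have "n > 0" using assms by (cases n) auto
  hence B: "2 * n * 1 \<le> 2 * n * n" by (intro mult_le_mono2) simp
  show ?thesis using le_trans[OF A] B by simp
next
  case False thus ?thesis using bnd2 assms by simp
qed

lemma S_finite:
  assumes "a \<ge> 1" "n > 0"
  shows "finite {(x :: nat, y :: nat). x > 0 \<and> y > 0 \<and> real a / real n = 1 / real x + 1 / real y}"
proof (rule finite_subset)
  show "{(x :: nat, y :: nat). x > 0 \<and> y > 0 \<and> real a / real n = 1 / real x + 1 / real y} \<subseteq> {..2*n*n} \<times> {..2*n*n}"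
  proof -
    have *: "x \<le> 2*n*n \<and> y \<le> 2*n*n" if h: "x > 0" "y > 0" "real a / real n = 1 / real x + 1 / real y" for x y :: nat
    proof -
      have e: "a * x * y = n * (x + y)" using eq_iff_nat assms h by blast
      have "a * y * x = n * (y + x)" using e by (simp add: algebra_simps)
      thus ?thesis using bnd[OF assms(1) h(1,2) e] bnd[OF assms(1) h(2,1)] by simp
    qed
    show ?thesis using * by auto
  qed
qed auto

lemma rep_imp_R:
  assumes "a \<ge> 1" "n > 0" "u > 0" "v > 0" "u * v dvd n" "a dvd u + v"
  shows "R n a \<noteq> 0"
proof -
  obtain k where k: "n = u * v * k" using assms(5) by blast
  obtain s where s: "u + v = a * s" using assms(6) by blast
  have k0: "k > 0" using k assms(2) by (cases k) auto
  have s0: "s > 0" using s assms(3) by (cases s) auto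
  let ?x = "s * k * u" and ?y = "s * k * v"
  have "a * ?x * ?y = n * (?x + ?y)"
  proof -
    have "a * ?x * ?y = (a * s) * s * k * k * u * v" by (simp add: algebra_simps)
    also have "\<dots> = (u + v) * s * k * k * u * v" by (simp only: s)
    also have "\<dots> = n * (?x + ?y)" by (simp add: k algebra_simps)
    finally show ?thesis .
  qed
  moreover have p: "?x > 0" "?y > 0" using k0 s0 assms by auto
  ultimately have "real a / real n = 1 / real ?x + 1 / real ?y"
    using eq_iff_nat[OF p assms(2)] by blast
  hence "(?x, ?y) \<in> {(x :: nat, y :: nat). x > 0 \<and> y > 0 \<and> real a / real n = 1 / real x + 1 / real y}"
    using p by blast
  hence "{(x :: nat, y :: nat). x > 0 \<and> y > 0 \<and> real a / real n = 1 / real x + 1 / real y} \<noteq> {}" by blast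
  thus ?thesis unfolding R_def using S_finite[OF assms(1,2)] by simp
qed

lemma R_imp_rep:
  assumes "a \<ge> 1" "n > 0" "coprime n a" "R n a \<noteq> 0"
  shows "\<exists>u v. u > 0 \<and> v > 0 \<and> u * v dvd n \<and> a dvd u + v"
proof -
  have "{(x :: nat, y :: nat). x > 0 \<and> y > 0 \<and> real a / real n = 1 / real x + 1 / real y} \<noteq> {}"
    using assms(4) unfolding R_def by (metis card.empty)
  then obtain x y :: nat where h: "x > 0" "y > 0" "real a / real n = 1 / real x + 1 / real y" by blast
  hence e: "a * x * y = n * (x + y)" using eq_iff_nat assms by blast
  define g where "g = gcd x y"
  have g0: "g > 0" using h g_def by simp
  obtain u where u: "x = g * u" using g_def by (metis gcd_dvd1 dvdE)
  obtain v where v: "y = g * v" using g_def by (metis gcd_dvd2 dvdE)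
  have u0: "u > 0" "v > 0" using u v h by auto
  have cuv: "coprime u v"
  proof -
    have "gcd x y = g * gcd u v" using u v by (simp add: gcd_mult_distrib_nat)
    hence "g * gcd u v = g * 1" using g_def by (metis mult_1_right)
    hence "gcd u v = 1" using g0 by (simp only: mult_left_cancel)
    thus ?thesis by (simp only: coprime_iff_gcd_eq_1)
  qed
  have "g * (a * g * u * v) = a * (g * u) * (g * v)" by (simp add: algebra_simps)
  also have "\<dots> = a * x * y" by (simp only: u v)
  also have "\<dots> = n * (x + y)" by (rule e)
  also have "\<dots> = g * (n * (u + v))" by (simp add: u v algebra_simps)
  finally have "g * (a * g * u * v) = g * (n * (u + v))" .
  hence e2: "a * g * u * v = n * (u + v)" using g0 by simp
  have c2: "coprime (u * v) (u + v)" using cuv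
    by (smt (verit, del_insts) add.commute coprime_def coprime_mult_left_iff dvd_add_left_iff)
  have "u * v dvd n * (u + v)" using e2 by (metis dvd_triv_right mult.assoc mult.commute)
  hence "u * v dvd n" using c2 coprime_dvd_mult_left_iff by blast
  then obtain k where k: "n = u * v * k" by blast
  have "(u * v) * (a * g) = (u * v) * (k * (u + v))" using e2 k by (simp add: algebra_simps)
  hence e3: "a * g = k * (u + v)" using u0 by simp
  have "coprime a k" using assms(3) k by (metis coprime_commute coprime_mult_left_iff)
  moreover have "a dvd k * (u + v)" using e3 by (metis dvd_triv_left)
  ultimately have "a dvd u + v" using coprime_dvd_mult_right_iff by blast
  thus ?thesis using u0 \<open>u * v dvd n\<close> by blast
qed

lemma E_iff:
  assumes "a \<ge> 1" "n > 0" "coprime n a"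
  shows "n \<in> E_star a \<longleftrightarrow> \<not> (\<exists>u v. u > 0 \<and> v > 0 \<and> u * v dvd n \<and> a dvd u + v)"
proof -
  have "gcd n a = 1" using assms(3) by (simp only: coprime_iff_gcd_eq_1)
  thus ?thesis using rep_imp_R[OF assms(1,2)] R_imp_rep[OF assms] assms(2) unfolding E_star_def
    by blast
qed

definition sigs :: "int multiset \<Rightarrow> int set" where
  "sigs X = {sum_mset A - sum_mset B | A B. A + B \<subseteq># X}"

lemma sigs_0: "0 \<in> sigs X"
  unfolding sigs_def by (rule CollectI, rule exI[of _ "{#}"], rule exI[of _ "{#}"]) simp

lemma sigs_add1:
  assumes "s \<in> sigs X"
  shows "s \<in> sigs (add_mset x X)" "s + x \<in> sigs (add_mset x X)" "s - x \<in> sigs (add_mset x X)"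
proof -
  obtain A B where AB: "s = sum_mset A - sum_mset B" "A + B \<subseteq># X" using assms unfolding sigs_def by blast
  have "X \<subseteq># add_mset x X" by simp
  hence "A + B \<subseteq># add_mset x X" using AB(2) subset_mset.order_trans by blast
  thus "s \<in> sigs (add_mset x X)" using AB unfolding sigs_def by blast
  have "add_mset x A + B \<subseteq># add_mset x X" using AB(2) by simp
  moreover have "s + x = sum_mset (add_mset x A) - sum_mset B" using AB by simp
  ultimately show "s + x \<in> sigs (add_mset x X)" unfolding sigs_def by blast
  have "A + add_mset x B \<subseteq># add_mset x X" using AB(2) by simp
  moreover have "s - x = sum_mset A - sum_mset (add_mset x B)" using AB by simp
  ultimately show "s - x \<in> sigs (add_mset x X)" unfolding sigs_def by blast
qed

lemma sigs_add2:
  assumes "s \<in> sigs (add_mset x X)"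
  shows "s \<in> sigs X \<or> s - x \<in> sigs X \<or> s + x \<in> sigs X"
proof -
  obtain A B where AB: "s = sum_mset A - sum_mset B" "A + B \<subseteq># add_mset x X" using assms unfolding sigs_def by blast
  show ?thesis
  proof (cases "x \<in># A")
    case True
    then obtain A' where A': "A = add_mset x A'" by (metis insert_DiffM)
    have "A' + B \<subseteq># X" using AB(2) A' by simp
    moreover have "s - x = sum_mset A' - sum_mset B" using AB A' by simp
    ultimately show ?thesis unfolding sigs_def by blast
  next
    case F1: False
    show ?thesis
    proof (cases "x \<in># B")
      case True
      then obtain B' where B': "B = add_mset x B'" by (metis insert_DiffM)
      have "A + B' \<subseteq># X" using AB(2) B' by simp
      moreover have "s + x = sum_mset A - sum_mset B'" using AB B' by simp
      ultimately show ?thesis unfolding sigs_def by blast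
    next
      case False
      hence "x \<notin># A + B" using F1 by simp
      hence "A + B \<subseteq># X" using AB(2) by (metis Diff_eq_empty_iff_mset minus_add_mset_if_not_in_lhs)
      thus ?thesis using AB(1) unfolding sigs_def by blast
    qed
  qed
qed

lemma sigs_ext:
  assumes Y: "\<forall>s\<in>sigs Y'. 2 * s \<in> sigs X'"
    and X: "\<forall>t\<in>sigs X'. t + c \<in> sigs X \<and> t - c \<in> sigs X \<and> t \<in> sigs X"
    and ev: "even c"
  shows "\<forall>s\<in>sigs (add_mset (c div 2) Y'). 2 * s \<in> sigs X"
proof
  fix s assume "s \<in> sigs (add_mset (c div 2) Y')"
  hence "s \<in> sigs Y' \<or> s - c div 2 \<in> sigs Y' \<or> s + c div 2 \<in> sigs Y'" by (rule sigs_add2)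
  moreover have c2: "2 * (c div 2) = c" using ev by simp
  ultimately consider "2 * s \<in> sigs X'" | "2 * s - c \<in> sigs X'" | "2 * s + c \<in> sigs X'"
    using Y by (metis right_diff_distrib distrib_left)
  thus "2 * s \<in> sigs X" using X by (cases) (force+)
qed

lemma sigs_pair:
  assumes "t \<in> sigs X'" "c = a + b \<or> c = a - b"
  shows "t + c \<in> sigs (add_mset a (add_mset b X')) \<and> t - c \<in> sigs (add_mset a (add_mset b X')) \<and> t \<in> sigs (add_mset a (add_mset b X'))"
proof -
  have "t + b \<in> sigs (add_mset b X')" "t - b \<in> sigs (add_mset b X')" "t \<in> sigs (add_mset b X')"
    using sigs_add1[OF assms(1)] by auto
  hence "t + b + a \<in> sigs (add_mset a (add_mset b X'))" "t - b - a \<in> sigs (add_mset a (add_mset b X'))"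
    "t - b + a \<in> sigs (add_mset a (add_mset b X'))" "t + b - a \<in> sigs (add_mset a (add_mset b X'))"
    "t \<in> sigs (add_mset a (add_mset b X'))"
    using sigs_add1 by blast+
  thus ?thesis using assms(2) by (auto simp: algebra_simps)
qed

lemma halve:
  assumes "m \<ge> 1" "\<forall>x\<in>#X. \<not> 2 ^ (m + 1) dvd x"
  shows "\<exists>Y. size X \<le> 2 * size Y + (if (\<exists>x\<in>#X. even x) then 0 else 1) \<and>
             (\<forall>y\<in>#Y. \<not> 2 ^ m dvd y) \<and> (\<forall>s\<in>sigs Y. 2 * s \<in> sigs X)"
  using assms(2)
proof (induction "size X" arbitrary: X rule: less_induct)
  case less
  show ?case
  proof (cases "\<exists>x\<in>#X. even x")
    case True
    then obtain x where x: "x \<in># X" "even x" by blast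
    define X' where "X' = X - {#x#}"
    have XX: "X = add_mset x X'" using x X'_def by simp
    have "size X' < size X" using XX by simp
    moreover have "\<forall>x\<in>#X'. \<not> 2 ^ (m + 1) dvd x" using less.prems XX by simp
    ultimately obtain Y' where Y': "size X' \<le> 2 * size Y' + (if (\<exists>x\<in>#X'. even x) then 0 else 1)"
      "\<forall>y\<in>#Y'. \<not> 2 ^ m dvd y" "\<forall>s\<in>sigs Y'. 2 * s \<in> sigs X'"
      using less.hyps by blast
    have nd: "\<not> 2 ^ m dvd x div 2"
    proof
      assume "2 ^ m dvd x div 2"
      hence "2 * 2 ^ m dvd 2 * (x div 2)" by simp
      hence "2 ^ (m + 1) dvd x" using x(2) by simp
      thus False using less.prems x(1) by blast
    qed
    have "\<forall>t\<in>sigs X'. t + x \<in> sigs X \<and> t - x \<in> sigs X \<and> t \<in> sigs X"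
      using sigs_add1 XX by blast
    hence "\<forall>s\<in>sigs (add_mset (x div 2) Y'). 2 * s \<in> sigs X"
      using sigs_ext[OF Y'(3) _ x(2)] by blast
    moreover have "size X \<le> 2 * size (add_mset (x div 2) Y') + (if (\<exists>x\<in>#X. even x) then 0 else 1)"
      using Y'(1) XX True by (auto split: if_splits)
    moreover have "\<forall>y\<in>#add_mset (x div 2) Y'. \<not> 2 ^ m dvd y" using Y'(2) nd by simp
    ultimately show ?thesis by blast
  next
    case False
    hence odd: "\<forall>x\<in>#X. odd x" by blast
    show ?thesis
    proof (cases "size X \<ge> 2")
      case False
      hence "size X \<le> 1" by simp
      moreover have "sigs {#} = {0}" unfolding sigs_def by auto
      ultimately show ?thesis using sigs_0[of X] \<open>\<not> (\<exists>x\<in>#X. even x)\<close>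
        by (intro exI[of _ "{#}"]) auto
    next
      case True
      hence "set_mset X \<noteq> {}" by (cases X) auto
      then obtain a where a: "a \<in># X" by blast
      define X1 where "X1 = X - {#a#}"
      have XX1: "X = add_mset a X1" using a X1_def by simp
      have "size X1 \<ge> 1" using True XX1 by simp
      hence "set_mset X1 \<noteq> {}" by (cases X1) auto
      then obtain b where b: "b \<in># X1" by blast
      define X' where "X' = X1 - {#b#}"
      have XX: "X = add_mset a (add_mset b X')" using XX1 b X'_def by simp
      have oa: "odd a" "odd b" using odd XX by auto
      have na: "\<not> 2 ^ (m + 1) dvd a" using less.prems XX by simp
      define c where "c = (if 2 ^ (m + 1) dvd a + b then a - b else a + b)"
      have "even (a + b)" "even (a - b)" using oa by presburger+
      hence c4: "even c" unfolding c_def by simp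
      have cab: "c = a + b \<or> c = a - b" unfolding c_def by simp
      have nc: "\<not> 2 ^ (m + 1) dvd c"
      proof
        assume h: "2 ^ (m + 1) dvd c"
        have "\<not> 2 ^ (m + 1) dvd a + b \<or> \<not> 2 ^ (m + 1) dvd a - b"
        proof (rule ccontr)
          assume "\<not> (\<not> 2 ^ (m + 1) dvd a + b \<or> \<not> 2 ^ (m + 1) dvd a - b)"
          hence "2 ^ (m + 1) dvd (a + b) + (a - b)" by (meson dvd_add)
          moreover have "(a + b) + (a - b) = 2 * a" by simp
          ultimately have "2 * 2 ^ m dvd 2 * a" by simp
          hence "2 ^ m dvd a" by simp
          moreover have "(2::int) dvd 2 ^ m" using assms(1) by (simp add: dvd_power)
          ultimately show False using oa by (meson dvd_trans)
        qed
        thus False using h unfolding c_def by (auto split: if_splits)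
      qed
      have "size X' < size X" using XX by simp
      moreover have X'p: "\<forall>x\<in>#X'. \<not> 2 ^ (m + 1) dvd x" using less.prems XX by simp
      ultimately obtain Y' where Y': "size X' \<le> 2 * size Y' + (if (\<exists>x\<in>#X'. even x) then 0 else 1)"
        "\<forall>y\<in>#Y'. \<not> 2 ^ m dvd y" "\<forall>s\<in>sigs Y'. 2 * s \<in> sigs X'"
        using less.hyps by blast
      have nd: "\<not> 2 ^ m dvd c div 2"
      proof
        assume "2 ^ m dvd c div 2"
        hence "2 * 2 ^ m dvd 2 * (c div 2)" by simp
        hence "2 ^ (m + 1) dvd c" using c4 by simp
        thus False using nc by blast
      qed
      have "\<forall>t\<in>sigs X'. t + c \<in> sigs X \<and> t - c \<in> sigs X \<and> t \<in> sigs X"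
        using sigs_pair[OF _ cab] XX by blast
      hence "\<forall>s\<in>sigs (add_mset (c div 2) Y'). 2 * s \<in> sigs X"
        using sigs_ext[OF Y'(3) _ c4] by blast
      moreover have "size X \<le> 2 * size (add_mset (c div 2) Y') + (if (\<exists>x\<in>#X. even x) then 0 else 1)"
        using Y'(1) XX \<open>\<not> (\<exists>x\<in>#X. even x)\<close> by (auto split: if_splits)
      moreover have "\<forall>y\<in>#add_mset (c div 2) Y'. \<not> 2 ^ m dvd y" using Y'(2) nd by simp
      ultimately show ?thesis by blast
    qed
  qed
qed

lemma double_cong:
  fixes s :: int
  assumes "[s = 2 ^ k] (mod 2 ^ Suc k)"
  shows "[2 * s = 2 ^ Suc k] (mod 2 ^ Suc (Suc k))"
proof -
  have "2 ^ Suc k dvd s - 2 ^ k" using assms by (simp add: cong_iff_dvd_diff)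
  hence "2 * 2 ^ Suc k dvd 2 * (s - 2 ^ k)" by (rule mult_dvd_mono[OF dvd_refl])
  moreover have "2 * 2 ^ Suc k = (2::int) ^ Suc (Suc k)" "2 * (s - 2 ^ k) = 2 * s - 2 ^ Suc k"
    by (simp_all add: algebra_simps)
  ultimately have "2 ^ Suc (Suc k) dvd 2 * s - 2 ^ Suc k" by simp
  thus ?thesis by (simp add: cong_iff_dvd_diff)
qed

lemma mem_sigs: "x \<in># X \<Longrightarrow> x \<in> sigs X"
proof -
  assume "x \<in># X"
  then obtain X' where "X = add_mset x X'" by (metis insert_DiffM)
  thus ?thesis using sigs_add1(2)[OF sigs_0[of X'], of x] by simp
qed

lemma comb1:
  "\<forall>X. (\<forall>x\<in>#X. \<not> (2::int) ^ Suc k dvd x) \<longrightarrow> 2 ^ k \<le> size X \<longrightarrow> (\<exists>s\<in>sigs X. [s = 2 ^ k] (mod 2 ^ Suc k))"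
proof (induction k)
  case 0
  show ?case
  proof (intro allI impI)
    fix X :: "int multiset" assume h: "\<forall>x\<in>#X. \<not> (2::int) ^ Suc 0 dvd x" "2 ^ 0 \<le> size X"
    hence "set_mset X \<noteq> {}" by (cases X) auto
    then obtain x where x: "x \<in># X" by blast
    hence "odd x" using h by simp
    hence "[x = 2 ^ 0] (mod 2 ^ Suc 0)" by (simp add: cong_def odd_iff_mod_2_eq_one)
    thus "\<exists>s\<in>sigs X. [s = 2 ^ 0] (mod 2 ^ Suc 0)" using mem_sigs[OF x] by blast
  qed
next
  case (Suc k)
  show ?case
  proof (intro allI impI)
    fix X :: "int multiset" assume h: "\<forall>x\<in>#X. \<not> (2::int) ^ Suc (Suc k) dvd x" "2 ^ Suc k \<le> size X"
    obtain Y where Y: "size X \<le> 2 * size Y + (if (\<exists>x\<in>#X. even x) then 0 else 1)"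
      "\<forall>y\<in>#Y. \<not> 2 ^ Suc k dvd y" "\<forall>s\<in>sigs Y. 2 * s \<in> sigs X"
      using halve[of "Suc k" X] h(1) by auto
    have "size X \<le> 2 * size Y + 1" using Y(1) by (auto split: if_splits)
    hence "2 * 2 ^ k \<le> 2 * size Y + 1" using h(2) by simp
    hence "2 ^ k \<le> size Y" by linarith
    then obtain s where s: "s \<in> sigs Y" "[s = 2 ^ k] (mod 2 ^ Suc k)" using Suc.IH Y(2) by blast
    show "\<exists>s\<in>sigs X. [s = 2 ^ Suc k] (mod 2 ^ Suc (Suc k))"
      using Y(3) s double_cong by blast
  qed
qed

lemma comb2:
  "\<forall>X. (\<forall>x\<in>#X. \<not> (2::int) ^ Suc k dvd x) \<longrightarrow> 2 ^ k \<le> size X + 1 \<longrightarrow>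
      \<not> (\<exists>e. odd e \<and> (\<forall>x\<in>#X. [x = e] (mod 2 ^ Suc k) \<or> [x = - e] (mod 2 ^ Suc k))) \<longrightarrow>
      (\<exists>s\<in>sigs X. [s = 2 ^ k] (mod 2 ^ Suc k))"
proof (induction k)
  case 0
  show ?case
  proof (intro allI impI)
    fix X :: "int multiset" assume h: "\<forall>x\<in>#X. \<not> (2::int) ^ Suc 0 dvd x"
      "\<not> (\<exists>e. odd e \<and> (\<forall>x\<in>#X. [x = e] (mod 2 ^ Suc 0) \<or> [x = - e] (mod 2 ^ Suc 0)))"
    have "\<forall>x\<in>#X. [x = 1] (mod 2 ^ Suc 0)" using h(1) by (simp add: cong_def odd_iff_mod_2_eq_one)
    hence False using h(2) by (metis odd_one)
    thus "\<exists>s\<in>sigs X. [s = 2 ^ 0] (mod 2 ^ Suc 0)" ..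
  qed
next
  case (Suc k)
  show ?case
  proof (intro allI impI)
    fix X :: "int multiset" assume h: "\<forall>x\<in>#X. \<not> (2::int) ^ Suc (Suc k) dvd x" "2 ^ Suc k \<le> size X + 1"
      "\<not> (\<exists>e. odd e \<and> (\<forall>x\<in>#X. [x = e] (mod 2 ^ Suc (Suc k)) \<or> [x = - e] (mod 2 ^ Suc (Suc k))))"
    show "\<exists>s\<in>sigs X. [s = 2 ^ Suc k] (mod 2 ^ Suc (Suc k))"
    proof (cases "2 ^ Suc k \<le> size X")
      case True thus ?thesis using comb1[of "Suc k"] h(1) by blast
    next
      case False
      hence sz: "size X + 1 = 2 ^ Suc k" using h(2) by simp
      show ?thesis
      proof (cases "\<exists>x\<in>#X. even x")
        case True
        obtain Y where Y: "size X \<le> 2 * size Y + (if (\<exists>x\<in>#X. even x) then 0 else 1)"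
          "\<forall>y\<in>#Y. \<not> 2 ^ Suc k dvd y" "\<forall>s\<in>sigs Y. 2 * s \<in> sigs X"
          using halve[of "Suc k" X] h(1) by auto
        have "size X \<le> 2 * size Y" using Y(1) True by simp
        hence "2 * 2 ^ k \<le> 2 * size Y + 1" using sz by simp
        hence "2 ^ k \<le> size Y" by linarith
        then obtain s where s: "s \<in> sigs Y" "[s = 2 ^ k] (mod 2 ^ Suc k)" using comb1[of k] Y(2) by blast
        show ?thesis using Y(3) s double_cong by blast
      next
        case False
        hence odd: "\<forall>x\<in>#X. odd x" by blast
        have "size X \<ge> 1" using sz by (cases "size X") auto
        hence "set_mset X \<noteq> {}" by (cases X) auto
        then obtain a where a: "a \<in># X" by blast
        have oa: "odd a" using odd a by blast
        obtain b where b: "b \<in># X" "\<not> [b = a] (mod 2 ^ Suc (Suc k))" "\<not> [b = - a] (mod 2 ^ Suc (Suc k))"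
          using h(3) oa by blast
        have "b \<noteq> a" using b(2) by auto
        define X1 where "X1 = X - {#a#}"
        have XX1: "X = add_mset a X1" using a X1_def by simp
        have "b \<in># X1" using b(1) \<open>b \<noteq> a\<close> XX1 by simp
        define X' where "X' = X1 - {#b#}"
        have XX: "X = add_mset a (add_mset b X')" using XX1 \<open>b \<in># X1\<close> X'_def by simp
        have ob: "odd b" using odd b by blast
        define c where "c = (if 4 dvd a + b then a + b else a - b)"
        have "4 dvd a + b \<or> 4 dvd a - b" using oa ob by presburger
        hence c4: "4 dvd c" unfolding c_def by auto
        have cab: "c = a + b \<or> c = a - b" unfolding c_def by simp
        have nc: "\<not> 2 ^ Suc (Suc k) dvd c"
        proof
          assume "2 ^ Suc (Suc k) dvd c"
          hence "2 ^ Suc (Suc k) dvd b - (- a) \<or> 2 ^ Suc (Suc k) dvd b - a"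
            using cab by (auto simp: algebra_simps dvd_diff_commute)
          thus False using b(2,3) by (auto simp: cong_iff_dvd_diff)
        qed
        have X'p: "\<forall>x\<in>#X'. \<not> 2 ^ (Suc k + 1) dvd x" using h(1) XX by simp
        obtain Y' where Y': "size X' \<le> 2 * size Y' + (if (\<exists>x\<in>#X'. even x) then 0 else 1)"
          "\<forall>y\<in>#Y'. \<not> 2 ^ Suc k dvd y" "\<forall>s\<in>sigs Y'. 2 * s \<in> sigs X'"
          using halve[of "Suc k" X'] X'p by auto
        have ev: "even c" using c4 by (metis dvd_trans even_numeral dvd_refl numeral_Bit0)
        have "\<forall>t\<in>sigs X'. t + c \<in> sigs X \<and> t - c \<in> sigs X \<and> t \<in> sigs X"
          using sigs_pair[OF _ cab] XX by blast
        hence Ysig: "\<forall>s\<in>sigs (add_mset (c div 2) Y'). 2 * s \<in> sigs X"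
          using sigs_ext[OF Y'(3) _ ev] by blast
        let ?Y = "add_mset (c div 2) Y'"
        have "size X' \<le> 2 * size Y' + 1" using Y'(1) by (auto split: if_splits)
        moreover have "size X = size X' + 2" using XX by simp
        ultimately have "2 * 2 ^ k \<le> 2 * size Y' + 4" using sz by simp
        hence sY: "2 ^ k \<le> size ?Y + 1" by simp
        have nd: "\<not> 2 ^ Suc k dvd c div 2"
        proof
          assume "2 ^ Suc k dvd c div 2"
          hence "2 * 2 ^ Suc k dvd 2 * (c div 2)" by (rule mult_dvd_mono[OF dvd_refl])
          hence "2 ^ Suc (Suc k) dvd c" using ev by simp
          thus False using nc by blast
        qed
        have Yp: "\<forall>y\<in>#?Y. \<not> 2 ^ Suc k dvd y" using Y'(2) nd by simp
        have ec2: "even (c div 2)" using c4 by (auto elim!: dvdE)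
        have "\<not> (\<exists>e. odd e \<and> (\<forall>x\<in>#?Y. [x = e] (mod 2 ^ Suc k) \<or> [x = - e] (mod 2 ^ Suc k)))"
        proof
          assume "\<exists>e. odd e \<and> (\<forall>x\<in>#?Y. [x = e] (mod 2 ^ Suc k) \<or> [x = - e] (mod 2 ^ Suc k))"
          then obtain e where e: "odd e" "[c div 2 = e] (mod 2 ^ Suc k) \<or> [c div 2 = - e] (mod 2 ^ Suc k)" by auto
          have "(2::int) dvd 2 ^ Suc k" by simp
          hence "[c div 2 = e] (mod 2) \<or> [c div 2 = - e] (mod 2)" using e(2) cong_dvd_modulus by blast
          hence "2 dvd c div 2 - e \<or> 2 dvd c div 2 + e" by (auto simp: cong_iff_dvd_diff)
          thus False using ec2 e(1) by auto
        qed
        then obtain s where s: "s \<in> sigs ?Y" "[s = 2 ^ k] (mod 2 ^ Suc k)"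
          using Suc.IH Yp sY by blast
        show ?thesis using Ysig s double_cong by blast
      qed
    qed
  qed
qed

lemma sigs_empty: "sigs {#} = {0}" unfolding sigs_def by auto

lemma lift:
  "s \<in> sigs (image_mset f M) \<Longrightarrow> \<exists>A B. A + B \<subseteq># M \<and> s = sum_mset (image_mset f A) - sum_mset (image_mset f B)"
proof (induction M arbitrary: s)
  case empty
  hence "s = 0" using sigs_empty by simp
  thus ?case by (intro exI[of _ "{#}"]) simp
next
  case (add x M)
  have "s \<in> sigs (add_mset (f x) (image_mset f M))" using add.prems by simp
  hence "s \<in> sigs (image_mset f M) \<or> s - f x \<in> sigs (image_mset f M) \<or> s + f x \<in> sigs (image_mset f M)"
    by (rule sigs_add2)
  moreover have Ms: "M \<subseteq># add_mset x M" by simp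
  ultimately consider
      (a) A B where "A + B \<subseteq># M" "s = sum_mset (image_mset f A) - sum_mset (image_mset f B)"
    | (b) A B where "A + B \<subseteq># M" "s - f x = sum_mset (image_mset f A) - sum_mset (image_mset f B)"
    | (c) A B where "A + B \<subseteq># M" "s + f x = sum_mset (image_mset f A) - sum_mset (image_mset f B)"
    using add.IH by blast
  thus ?case
  proof cases
    case a thus ?thesis using Ms subset_mset.order_trans by blast
  next
    case b
    have "add_mset x A + B \<subseteq># add_mset x M" using b(1) by simp
    moreover have "s = sum_mset (image_mset f (add_mset x A)) - sum_mset (image_mset f B)" using b(2) by simp
    ultimately show ?thesis by blast
  next
    case c
    have "A + add_mset x B \<subseteq># add_mset x M" using c(1) by simp
    moreover have "s = sum_mset (image_mset f A) - sum_mset (image_mset f (add_mset x B))" using c(2) by simp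
    ultimately show ?thesis by blast
  qed
qed

lemma prod_cong:
  fixes a g :: nat
  shows "(\<forall>r\<in>#C. [r = g ^ k r] (mod a)) \<Longrightarrow> [prod_mset C = g ^ sum_mset (image_mset k C)] (mod a)"
proof (induction C)
  case empty thus ?case by simp
next
  case (add x C)
  have "[x * prod_mset C = g ^ k x * g ^ sum_mset (image_mset k C)] (mod a)"
    using add by (intro cong_mult) auto
  thus ?case by (simp add: power_add)
qed

lemma exp_exists:
  assumes "a > 1" "residue_primroot a g" "coprime r a"
  shows "\<exists>k. [r = g ^ k] (mod a)"
proof -
  have "r mod a \<noteq> 0" using assms
    using coprime_common_divisor_nat dvd_refl mod_eq_0_iff_dvd by blast
  moreover have "coprime (r mod a) a" using assms(1,3)
    by (metis coprime_commute coprime_mod_right_iff gr_implies_not0)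
  ultimately have "r mod a \<in> totatives a" using assms(1) by (auto simp: totatives_def intro: less_imp_le)
  moreover have im: "(\<lambda>i. g ^ i mod a) ` {..<totient a} = totatives a"
    using residue_primroot_is_generator[OF assms(1,2)] by (rule bij_betw_imp_surj_on)
  ultimately have "r mod a \<in> (\<lambda>i. g ^ i mod a) ` {..<totient a}" by (simp only: im)
  then obtain i where "r mod a = g ^ i mod a" by (rule imageE)
  thus ?thesis unfolding cong_def by blast
qed

lemma half_power:
  assumes p: "prime p" "odd p" and a: "a = p ^ \<gamma>" "\<gamma> \<ge> 1" and g: "residue_primroot a g"
    and phi: "totient a = 2 ^ m * d" and m1: "m \<ge> 1"
  shows "a dvd g ^ (totient a div 2) + 1"
proof -
  define h where "h = g ^ (totient a div 2)"
  have ordg: "ord a g = totient a" using g by (simp add: residue_primroot_def)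
  have tpos: "totient a > 0" using g by (simp add: residue_primroot_def)
  have ev: "even (totient a)" using phi m1 by (cases m) auto
  have "[h ^ 2 = 1] (mod a)"
  proof -
    have "h ^ 2 = g ^ totient a" unfolding h_def using ev by (simp add: power_mult[symmetric])
    thus ?thesis using ord[of g a] ordg by simp
  qed
  moreover have "\<not> [h = 1] (mod a)"
  proof -
    obtain t where t: "totient a = 2 * t" using ev by blast
    have "0 < t" using tpos t by simp
    hence "0 < totient a div 2" "totient a div 2 < ord a g" using t ordg by simp_all
    thus ?thesis unfolding h_def using ord_minimal by blast
  qed
  ultimately have d1: "int a dvd (int h - 1) * (int h + 1)" and nd: "\<not> int a dvd int h - 1"
    by (auto simp: cong_int_iff[symmetric] cong_iff_dvd_diff power2_eq_square algebra_simps)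
  have pp: "prime (int p)" using p by simp
  have "\<not> (int p dvd int h - 1 \<and> int p dvd int h + 1)"
  proof
    assume "int p dvd int h - 1 \<and> int p dvd int h + 1"
    hence "int p dvd (int h + 1) - (int h - 1)" by (meson dvd_diff)
    hence "int p dvd 2" by simp
    hence "p dvd 2" by presburger
    thus False using p by (metis dvd_antisym nat_dvd_1_iff_1 prime_nat_iff two_is_prime_nat even_numeral prime_prime_factor)
  qed
  moreover
  have "coprime (int a) x" if "\<not> int p dvd x" for x
  proof -
    have "coprime (int p) x" using pp that by (simp add: prime_imp_coprime)
    thus ?thesis using a by (simp add: coprime_power_left_iff)
  qed
  ultimately consider "coprime (int a) (int h - 1)" | "coprime (int a) (int h + 1)" by blast
  hence "int a dvd int h + 1"
  proof cases
    case 1 thus ?thesis using d1 by (metis coprime_dvd_mult_right_iff)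
  next
    case 2 hence "int a dvd int h - 1" using d1 by (metis coprime_dvd_mult_left_iff)
    thus ?thesis using nd by blast
  qed
  hence "int a dvd int (h + 1)" by (simp add: add.commute)
  thus ?thesis unfolding h_def by (simp only: int_dvd_int_iff)
qed

locale Lctx =
  fixes p \<gamma> a m d n :: nat and H :: "int set" and g :: nat
  assumes p: "prime p" "odd p" and ga: "\<gamma> \<ge> 1" and a: "a = p ^ \<gamma>"
    and phi: "totient a = 2 ^ m * d" and od: "odd d"
    and Hs: "subgroup H (unit_group a)" and Ho: "odd (card H)"
    and Hm: "\<forall>K. subgroup K (unit_group a) \<and> odd (card K) \<and> H \<subseteq> K \<longrightarrow> K = H"
    and n0: "n > 0" and cop: "gcd n a = 1"
    and Hres: "H \<subseteq> {int r mod int a | r. r \<in># prime_factorization n}"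
    and g: "residue_primroot a g"
begin

definition kk :: "nat \<Rightarrow> nat" where "kk r = (SOME k. [r = g ^ k] (mod a))"

lemma p3: "p \<ge> 3" using p by (metis One_nat_def Suc_1 dvd_refl le_antisym not_less_eq_eq numeral_3_eq_3 prime_ge_2_nat)

lemma a1: "a > 1"
proof -
  have "p \<le> p ^ \<gamma>" using ga p3 by (simp add: self_le_power)
  thus ?thesis using a p3 by simp
qed

lemma a2: "a > 2"
proof -
  have "p \<le> p ^ \<gamma>" using ga p3 by (simp add: self_le_power)
  thus ?thesis using a p3 by simp
qed

lemma m1: "m \<ge> 1"
proof (rule ccontr)
  assume "\<not> m \<ge> 1"
  hence "totient a = d" using phi by simp
  thus False using totient_even[OF a2] od by simp
qed

lemma copn: "coprime n a" using cop by (simp only: coprime_iff_gcd_eq_1)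

lemma P_cop: "r \<in># prime_factorization n \<Longrightarrow> coprime r a"
proof -
  assume "r \<in># prime_factorization n"
  hence "r dvd n" by (simp add: in_prime_factors_imp_dvd)
  thus ?thesis using copn by (meson coprime_imp_coprime dvd_trans dvd_refl coprime_divisors)
qed

lemma P_pos: "r \<in># prime_factorization n \<Longrightarrow> r > 0"
  using in_prime_factors_imp_prime prime_gt_0_nat by blast

lemma kk_prop: "coprime r a \<Longrightarrow> [r = g ^ kk r] (mod a)"
  unfolding kk_def using exp_exists[OF a1 g] by (metis someI_ex)

lemma isH: "coprime r a \<Longrightarrow> int r mod int a \<in> H \<longleftrightarrow> 2 ^ m dvd kk r"
  using H_nat[OF a1 g phi od Hs Ho Hm _ kk_prop] by blast

lemma phi2: "totient a div 2 = 2 ^ (m - 1) * d"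
proof -
  have "(2::nat) ^ m = 2 * 2 ^ (m - 1)" using m1 by (cases m) auto
  hence "totient a = 2 * (2 ^ (m - 1) * d)" using phi by (simp only: mult.assoc)
  thus ?thesis by simp
qed

lemma half: "a dvd g ^ (totient a div 2) + 1"
  using half_power[OF p a ga g phi m1] .

lemma phi2_cong: "[int (totient a div 2) = 2 ^ (m - 1)] (mod 2 ^ m)"
proof -
  obtain t where t: "d = 2 * t + 1" using od by (metis oddE)
  have "int (totient a div 2) - 2 ^ (m - 1) = 2 ^ (m - 1) * 2 * int t" using phi2 t by (simp add: algebra_simps)
  also have "\<dots> = 2 ^ m * int t" using m1 by (cases m) auto
  finally show ?thesis by (simp add: cong_iff_dvd_diff)
qed

lemma gexp_cong: "[g ^ i = g ^ j] (mod a) \<longleftrightarrow> [int i = int j] (mod int (totient a))"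
proof -
  have "coprime a g" using g by (simp add: residue_primroot_def)
  hence "[g ^ i = g ^ j] (mod a) \<longleftrightarrow> [i = j] (mod ord a g)" by (rule order_divides_expdiff)
  also have "ord a g = totient a" using g by (simp add: residue_primroot_def)
  finally show ?thesis by (simp add: cong_int_iff)
qed

end

lemma sum_int: "sum_mset (image_mset (\<lambda>r. int (f r)) A) = int (sum_mset (image_mset f A))"
  by (induction A) auto

context Lctx begin

lemma sub_pos: "C \<subseteq># prime_factorization n \<Longrightarrow> prod_mset C > 0"
proof -
  assume "C \<subseteq># prime_factorization n"
  hence "\<forall>x\<in>#C. x > 0" using P_pos by (meson mset_subset_eqD)
  thus ?thesis by (induction C) auto
qed

lemma sub_cong: "C \<subseteq># prime_factorization n \<Longrightarrow> [prod_mset C = g ^ sum_mset (image_mset kk C)] (mod a)"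
proof -
  assume "C \<subseteq># prime_factorization n"
  hence "\<forall>r\<in>#C. [r = g ^ kk r] (mod a)" using P_cop kk_prop by (meson mset_subset_eqD)
  thus ?thesis by (rule prod_cong)
qed

lemma construct:
  assumes s: "s \<in> sigs (image_mset (\<lambda>r. int (kk r)) (filter_mset (\<lambda>r. int r mod int a \<notin> H) (prime_factorization n)))"
    and sc: "[s = 2 ^ (m - 1)] (mod 2 ^ m)"
  shows "n \<notin> E_star a"
proof -
  define P where "P = prime_factorization n"
  define T where "T = filter_mset (\<lambda>r. int r mod int a \<notin> H) P"
  define \<phi> where "\<phi> = totient a"
  define \<phi>2 where "\<phi>2 = totient a div 2"
  obtain A B where AB: "A + B \<subseteq># T"
    "s = sum_mset (image_mset (\<lambda>r. int (kk r)) A) - sum_mset (image_mset (\<lambda>r. int (kk r)) B)"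
    using lift[OF s] unfolding T_def P_def by blast
  define SA where "SA = sum_mset (image_mset kk A)"
  define SB where "SB = sum_mset (image_mset kk B)"
  have sAB: "s = int SA - int SB" using AB(2) unfolding SA_def SB_def by (simp only: sum_int)
  define c where "c = s - int \<phi>2"
  have "[s = int \<phi>2] (mod 2 ^ m)" using sc phi2_cong unfolding \<phi>2_def by (metis cong_sym cong_trans)
  hence c2: "2 ^ m dvd c" unfolding c_def by (simp add: cong_iff_dvd_diff)
  have \<phi>pos: "\<phi> > 0" using g unfolding \<phi>_def by (simp add: residue_primroot_def)
  define c' where "c' = nat (c mod int \<phi>)"
  have c'eq: "int c' = c mod int \<phi>" unfolding c'_def using \<phi>pos by simp
  have "(2::int) ^ m dvd int \<phi>" unfolding \<phi>_def phi by simp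
  hence "(2::int) ^ m dvd c mod int \<phi>" using c2 by (simp add: dvd_mod_iff)
  hence "int (2 ^ m) dvd int c'" using c'eq by simp
  hence c'2: "2 ^ m dvd c'" by (simp only: int_dvd_int_iff)
  define h where "h = g ^ c'"
  have "coprime a g" using g by (simp add: residue_primroot_def)
  hence coph: "coprime h a" unfolding h_def by (simp add: coprime_commute)
  have "int h mod int a \<in> H"
    using H_nat[OF a1 g phi od Hs Ho Hm coph, of c'] c'2 unfolding h_def by simp
  then obtain q where q: "int h mod int a = int q mod int a" "q \<in># P" using Hres unfolding P_def by blast
  have qH: "int q mod int a \<in> H" using q \<open>int h mod int a \<in> H\<close> by simp
  have "[q = h] (mod a)" using q(1) by (metis cong_def cong_int_iff)
  hence "[g ^ kk q = g ^ c'] (mod a)" using kk_prop[OF P_cop[OF q(2)[unfolded P_def]]] unfolding h_def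
    by (metis cong_sym cong_trans)
  hence kq: "[int (kk q) = int c'] (mod int \<phi>)" unfolding \<phi>_def by (simp only: gexp_cong)
  have "[int c' = c] (mod int \<phi>)" using c'eq by (simp add: cong_def)
  hence kq2: "[int (kk q) = c] (mod int \<phi>)" using kq by (metis cong_trans)
  define B' where "B' = add_mset q B"
  have "{#q#} \<subseteq># filter_mset (\<lambda>r. \<not> (int r mod int a \<notin> H)) P" using q(2) qH by simp
  hence "A + B + {#q#} \<subseteq># T + filter_mset (\<lambda>r. \<not> (int r mod int a \<notin> H)) P"
    using AB(1) by (rule subset_mset.add_mono[rotated])
  moreover have "T + filter_mset (\<lambda>r. \<not> (int r mod int a \<notin> H)) P = P"
    unfolding T_def using multiset_partition[of P] by simp
  moreover have "A + B' = A + B + {#q#}" unfolding B'_def by simp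
  ultimately have sub: "A + B' \<subseteq># P" by simp
  have subA: "A \<subseteq># P" and subB: "B' \<subseteq># P" using sub by (auto intro: subset_mset.order_trans[OF _ sub])
  define u where "u = prod_mset A"
  define v where "v = prod_mset B'"
  have u0: "u > 0" "v > 0" using sub_pos subA subB unfolding u_def v_def P_def by auto
  have "u * v = prod_mset (A + B')" unfolding u_def v_def by simp
  also have "\<dots> dvd prod_mset P" using sub by (rule prod_mset_subset_imp_dvd)
  also have "\<dots> = n" unfolding P_def using n0 by simp
  finally have uvn: "u * v dvd n" .
  have uc: "[u = g ^ SA] (mod a)" using sub_cong subA unfolding u_def SA_def P_def by blast
  have vc0: "[v = g ^ sum_mset (image_mset kk B')] (mod a)" using sub_cong subB unfolding v_def P_def by blast
  have "sum_mset (image_mset kk B') = SB + kk q" unfolding SB_def B'_def by simp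
  hence vc: "[v = g ^ (SB + kk q)] (mod a)" using vc0 by simp
  have "[int SA = int (SB + kk q + \<phi>2)] (mod int \<phi>)"
  proof -
    have e: "int SA - int (SB + kk q + \<phi>2) = c - int (kk q)" unfolding c_def using sAB by simp
    have dv: "int \<phi> dvd c - int (kk q)" using kq2 by (simp add: cong_iff_dvd_diff dvd_diff_commute)
    show ?thesis using dv by (simp only: cong_iff_dvd_diff e)
  qed
  hence "[g ^ SA = g ^ (SB + kk q + \<phi>2)] (mod a)" unfolding \<phi>_def by (simp only: gexp_cong)
  hence "[u = g ^ (SB + kk q) * g ^ \<phi>2] (mod a)" using uc by (metis cong_trans power_add)
  moreover have "[g ^ (SB + kk q) * g ^ \<phi>2 = v * g ^ \<phi>2] (mod a)" using cong_mult[OF cong_sym[OF vc] cong_refl] .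
  ultimately have "[u = v * g ^ \<phi>2] (mod a)" by (rule cong_trans)
  hence "[u + v = v * (g ^ \<phi>2 + 1)] (mod a)" by (metis cong_add_rcancel_nat add.commute distrib_left mult_1_right)
  moreover have "a dvd v * (g ^ \<phi>2 + 1)" using half unfolding \<phi>2_def by (rule dvd_mult)
  ultimately have "a dvd u + v" using cong_dvd_iff by blast
  hence "\<exists>u v. u > 0 \<and> v > 0 \<and> u * v dvd n \<and> a dvd u + v" using u0 uvn by blast
  thus ?thesis using E_iff[of a n] a1 n0 copn by simp
qed

end

lemma final_contra:
  fixes e j :: int
  assumes m1: "m \<ge> 1" and oe: "odd e" and jb: "\<bar>j\<bar> < 2 ^ (m - 1)" and dv: "2 ^ m dvd e * j - 2 ^ (m - 1)"
  shows False
proof -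
  have pm: "(2::int) ^ m = 2 * 2 ^ (m - 1)" using m1 by (cases m) auto
  have "(2::int) ^ (m - 1) dvd 2 ^ m" using pm by simp
  hence "(2::int) ^ (m - 1) dvd e * j - 2 ^ (m - 1)" using dv by (rule dvd_trans)
  hence "(2::int) ^ (m - 1) dvd e * j" by (metis dvd_diff_commute dvd_refl dvd_add_left_iff diff_add_cancel)
  moreover have "coprime ((2::int) ^ (m - 1)) e" using oe by (simp add: coprime_power_left_iff)
  ultimately have "(2::int) ^ (m - 1) dvd j" using coprime_dvd_mult_right_iff by blast
  hence "j = 0"
  proof (rule contrapos_pp)
    assume "j \<noteq> 0"
    hence "\<bar>(2::int) ^ (m - 1)\<bar> \<le> \<bar>j\<bar>" using \<open>(2::int) ^ (m - 1) dvd j\<close> by (rule dvd_imp_le_int)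
    thus "\<not> (2::int) ^ (m - 1) dvd j" using jb by simp
  qed
  hence "(2::int) ^ m dvd 2 ^ (m - 1)" using dv by simp
  hence "(2::int) ^ m \<le> 2 ^ (m - 1)" by (simp add: zdvd_imp_le)
  thus False using pm by simp
qed

context Lctx begin

lemma count_lemma:
  assumes pm: "\<forall>r\<in>#filter_mset (\<lambda>r. int r mod int a \<notin> H) (prime_factorization n).
                 [int (kk r) = e] (mod 2 ^ m) \<or> [int (kk r) = - e] (mod 2 ^ m)"
  shows "C \<subseteq># prime_factorization n \<Longrightarrow> \<exists>j. \<bar>j\<bar> \<le> int (size (filter_mset (\<lambda>r. int r mod int a \<notin> H) C)) \<and>
            2 ^ m dvd int (sum_mset (image_mset kk C)) - e * j"
proof (induction C)
  case empty show ?case by (intro exI[of _ 0]) simp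
next
  case (add r C)
  have "C \<subseteq># add_mset r C" by simp
  hence CP: "C \<subseteq># prime_factorization n" using add.prems subset_mset.order_trans by blast
  have rP: "r \<in># prime_factorization n" using add.prems by (simp add: mset_subset_eqD)
  obtain j where j: "\<bar>j\<bar> \<le> int (size (filter_mset (\<lambda>r. int r mod int a \<notin> H) C))"
    "2 ^ m dvd int (sum_mset (image_mset kk C)) - e * j" using add.IH CP by blast
  have sumeq: "int (sum_mset (image_mset kk (add_mset r C))) = int (kk r) + int (sum_mset (image_mset kk C))" by simp
  show ?case
  proof (cases "int r mod int a \<in> H")
    case True
    hence "2 ^ m dvd kk r" using isH[OF P_cop[OF rP]] by blast
    hence "int (2 ^ m) dvd int (kk r)" by (simp only: int_dvd_int_iff)
    hence "(2::int) ^ m dvd int (kk r)" by simp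
    hence "2 ^ m dvd int (kk r) + (int (sum_mset (image_mset kk C)) - e * j)" using j(2) by (rule dvd_add)
    hence "2 ^ m dvd int (sum_mset (image_mset kk (add_mset r C))) - e * j" by (simp only: sumeq add_diff_eq)
    moreover have "filter_mset (\<lambda>r. int r mod int a \<notin> H) (add_mset r C) = filter_mset (\<lambda>r. int r mod int a \<notin> H) C"
      using True by simp
    ultimately show ?thesis using j(1) by metis
  next
    case False
    hence "r \<in># filter_mset (\<lambda>r. int r mod int a \<notin> H) (prime_factorization n)" using rP by simp
    hence "[int (kk r) = e] (mod 2 ^ m) \<or> [int (kk r) = - e] (mod 2 ^ m)" using pm by blast
    hence "2 ^ m dvd int (kk r) - e \<or> 2 ^ m dvd int (kk r) - (- e)" by (simp only: cong_iff_dvd_diff)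
    then obtain j' where j': "\<bar>j'\<bar> \<le> \<bar>j\<bar> + 1" "2 ^ m dvd int (kk r) - e * (j' - j)"
    proof
      assume "2 ^ m dvd int (kk r) - e"
      moreover have "\<bar>j + 1\<bar> \<le> \<bar>j\<bar> + 1" by simp
      moreover have "int (kk r) - e * (j + 1 - j) = int (kk r) - e" by simp
      ultimately show ?thesis using that by metis
    next
      assume "2 ^ m dvd int (kk r) - (- e)"
      moreover have "\<bar>j - 1\<bar> \<le> \<bar>j\<bar> + 1" by simp
      moreover have "int (kk r) - e * (j - 1 - j) = int (kk r) - (- e)" by simp
      ultimately show ?thesis using that by metis
    qed
    have dv: "2 ^ m dvd (int (kk r) - e * (j' - j)) + (int (sum_mset (image_mset kk C)) - e * j)"
      using j'(2) j(2) by (rule dvd_add)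
    have eq: "(int (kk r) - e * (j' - j)) + (int (sum_mset (image_mset kk C)) - e * j)
        = int (sum_mset (image_mset kk (add_mset r C))) - e * j'"
      by (simp only: sumeq) (simp add: algebra_simps)
    from dv have "2 ^ m dvd int (sum_mset (image_mset kk (add_mset r C))) - e * j'" unfolding eq .
    moreover have "size (filter_mset (\<lambda>r. int r mod int a \<notin> H) (add_mset r C)) = size (filter_mset (\<lambda>r. int r mod int a \<notin> H) C) + 1"
      using False by simp
    ultimately show ?thesis using j(1) j'(1) by (intro exI[of _ j']) auto
  qed
qed


lemma block:
  assumes oe: "odd e"
    and pm: "\<forall>r\<in>#filter_mset (\<lambda>r. int r mod int a \<notin> H) (prime_factorization n).
                 [int (kk r) = e] (mod 2 ^ m) \<or> [int (kk r) = - e] (mod 2 ^ m)"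
    and sz: "size (filter_mset (\<lambda>r. int r mod int a \<notin> H) (prime_factorization n)) < 2 ^ (m - 1)"
  shows "n \<in> E_star a"
proof -
  have "\<not> (\<exists>u v. u > 0 \<and> v > 0 \<and> u * v dvd n \<and> a dvd u + v)"
  proof
    assume "\<exists>u v. u > 0 \<and> v > 0 \<and> u * v dvd n \<and> a dvd u + v"
    then obtain u v where uv: "u > 0" "v > 0" "u * v dvd n" "a dvd u + v" by blast
    define U where "U = prime_factorization u"
    define V where "V = prime_factorization v"
    have "U + V = prime_factorization (u * v)" unfolding U_def V_def using uv by (simp add: prime_factorization_mult)
    also have "\<dots> \<subseteq># prime_factorization n"
      using uv n0 by (subst prime_factorization_subset_iff_dvd) auto
    finally have UV: "U + V \<subseteq># prime_factorization n" .
    have UP: "U \<subseteq># prime_factorization n" "V \<subseteq># prime_factorization n"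
      using UV by (auto intro: subset_mset.order_trans[OF _ UV])
    define SU where "SU = sum_mset (image_mset kk U)"
    define SV where "SV = sum_mset (image_mset kk V)"
    define \<phi>2 where "\<phi>2 = totient a div 2"
    have uc: "[u = g ^ SU] (mod a)" using sub_cong[OF UP(1)] uv unfolding U_def SU_def by simp
    have vc: "[v = g ^ SV] (mod a)" using sub_cong[OF UP(2)] uv unfolding V_def SV_def by simp
    have "[u + v = g ^ SU + g ^ SV] (mod a)" using uc vc by (rule cong_add)
    hence d1: "a dvd g ^ SU + g ^ SV" using uv(4) cong_dvd_iff by blast
    have "a dvd g ^ SV * (g ^ \<phi>2 + 1)" using half unfolding \<phi>2_def by (rule dvd_mult)
    hence d2: "a dvd g ^ (SV + \<phi>2) + g ^ SV" by (simp add: power_add algebra_simps)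
    have "[g ^ SU + g ^ SV = g ^ (SV + \<phi>2) + g ^ SV] (mod a)"
      using d1 d2 by (simp add: cong_def dvd_eq_mod_eq_0)
    hence "[g ^ SU = g ^ (SV + \<phi>2)] (mod a)" by (simp only: cong_add_rcancel_nat)
    hence "[int SU = int (SV + \<phi>2)] (mod int (totient a))" by (simp only: gexp_cong)
    hence t1: "int (totient a) dvd int SU - int (SV + \<phi>2)" by (simp only: cong_iff_dvd_diff)
    have t2: "(2::int) ^ m dvd int (totient a)" unfolding phi by simp
    have A0: "2 ^ m dvd int SU - int (SV + \<phi>2)" using dvd_trans[OF t2 t1] .
    have eqA: "int SU - int (SV + \<phi>2) = int SU - int SV - int \<phi>2" by simp
    from A0 have A1: "2 ^ m dvd int SU - int SV - int \<phi>2" unfolding eqA .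
    have A2: "2 ^ m dvd int \<phi>2 - 2 ^ (m - 1)" using phi2_cong unfolding \<phi>2_def by (simp only: cong_iff_dvd_diff)
    obtain jU where jU: "\<bar>jU\<bar> \<le> int (size (filter_mset (\<lambda>r. int r mod int a \<notin> H) U))" "2 ^ m dvd int SU - e * jU"
      using count_lemma[OF pm UP(1)] unfolding SU_def by blast
    obtain jV where jV: "\<bar>jV\<bar> \<le> int (size (filter_mset (\<lambda>r. int r mod int a \<notin> H) V))" "2 ^ m dvd int SV - e * jV"
      using count_lemma[OF pm UP(2)] unfolding SV_def by blast
    have "2 ^ m dvd (int SU - int SV - int \<phi>2) + (int \<phi>2 - 2 ^ (m - 1)) - (int SU - e * jU) + (int SV - e * jV)"
      using dvd_add[OF dvd_diff[OF dvd_add[OF A1 A2] jU(2)] jV(2)] .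
    moreover have eqB: "(int SU - int SV - int \<phi>2) + (int \<phi>2 - 2 ^ (m - 1)) - (int SU - e * jU) + (int SV - e * jV)
        = e * (jU - jV) - 2 ^ (m - 1)" by (simp add: algebra_simps)
    ultimately have dv: "2 ^ m dvd e * (jU - jV) - 2 ^ (m - 1)" by (simp only: eqB)
    have "size (filter_mset (\<lambda>r. int r mod int a \<notin> H) U) + size (filter_mset (\<lambda>r. int r mod int a \<notin> H) V)
        = size (filter_mset (\<lambda>r. int r mod int a \<notin> H) (U + V))" by simp
    also have "\<dots> \<le> size (filter_mset (\<lambda>r. int r mod int a \<notin> H) (prime_factorization n))"
      using UV by (intro size_mset_mono multiset_filter_mono)
    finally have f1: "int (size (filter_mset (\<lambda>r. int r mod int a \<notin> H) U)) + int (size (filter_mset (\<lambda>r. int r mod int a \<notin> H) V))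
        \<le> int (size (filter_mset (\<lambda>r. int r mod int a \<notin> H) (prime_factorization n)))" by linarith
    have f2: "int (size (filter_mset (\<lambda>r. int r mod int a \<notin> H) (prime_factorization n))) < 2 ^ (m - 1)"
      using sz by (metis of_nat_less_iff of_nat_numeral of_nat_power)
    have f3: "\<bar>jU - jV\<bar> \<le> \<bar>jU\<bar> + \<bar>jV\<bar>" by (rule abs_triangle_ineq4)
    have "\<bar>jU - jV\<bar> < 2 ^ (m - 1)" using f1 f2 f3 jU(1) jV(1) by linarith
    thus False using final_contra[OF m1 oe _ dv] by blast
  qed
  thus ?thesis using E_iff[of a n] a1 n0 copn by simp
qed

end

theorem lemma2p6:
  fixes p \<gamma> a m d n :: nat and H :: "int set"
  assumes "prime p" and "odd p" and "\<gamma> \<ge> 1" and "a = p ^ \<gamma>"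
    and "totient a = 2 ^ m * d" and "odd d"
    and "subgroup H (unit_group a)" and "odd (card H)"
    and "\<forall>K. subgroup K (unit_group a) \<and> odd (card K) \<and> H \<subseteq> K \<longrightarrow> K = H"
    and "n > 0" and "gcd n a = 1"
    and "H \<subseteq> {int r mod int a | r. r \<in># prime_factorization n}"
  shows "(size (filter_mset (\<lambda>r. int r mod int a \<notin> H) (prime_factorization n)) \<ge> 2 ^ (m - 1)
            \<longrightarrow> n \<notin> E_star a)
       \<and> (\<forall>g. residue_primroot a g \<longrightarrow>
            size (filter_mset (\<lambda>r. int r mod int a \<notin> H) (prime_factorization n)) = 2 ^ (m - 1) - 1
            \<longrightarrow> (n \<in> E_star a \<longleftrightarrow>
                 (\<exists>e::int. odd e \<and>
                    (\<forall>r \<in># filter_mset (\<lambda>r. int r mod int a \<notin> H) (prime_factorization n).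
                       \<exists>e'::nat. [r = g ^ e'] (mod a) \<and>
                          ([int e' = e] (mod 2 ^ m) \<or> [int e' = - e] (mod 2 ^ m))))))"
proof -
  define T where "T = filter_mset (\<lambda>r. int r mod int a \<notin> H) (prime_factorization n)"
  obtain g0 where g0a: "\<forall>k>0. residue_primroot (p ^ k) g0"
    using residue_primroot_odd_prime_power_exists[OF assms(1,2)] by blast
  have g0: "residue_primroot a g0" using g0a assms(3,4) by simp
  have L: "Lctx p \<gamma> a m d n H g" if "residue_primroot a g" for g
    unfolding Lctx_def using assms that by blast
  have m1: "m \<ge> 1" using Lctx.m1[OF L[OF g0]] .
  obtain k where mk: "m = Suc k" using m1 by (cases m) auto
  have Tnz: "\<forall>x\<in>#image_mset (\<lambda>r. int (Lctx.kk a g r)) T. \<not> (2::int) ^ Suc k dvd x"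
    if g: "residue_primroot a g" for g
  proof
    fix x assume "x \<in># image_mset (\<lambda>r. int (Lctx.kk a g r)) T"
    then obtain r where r: "r \<in># T" "x = int (Lctx.kk a g r)" by auto
    have rP: "r \<in># prime_factorization n" "int r mod int a \<notin> H" using r(1) unfolding T_def by auto
    have "\<not> 2 ^ m dvd Lctx.kk a g r"
      using Lctx.isH[OF L[OF g] Lctx.P_cop[OF L[OF g] rP(1)]] rP(2) by blast
    hence "\<not> int (2 ^ m) dvd int (Lctx.kk a g r)" using int_dvd_int_iff by blast
    thus "\<not> (2::int) ^ Suc k dvd x" using r(2) mk by simp
  qed
  have part1: "size T \<ge> 2 ^ (m - 1) \<longrightarrow> n \<notin> E_star a"
  proof
    assume sz: "size T \<ge> 2 ^ (m - 1)"
    hence "2 ^ k \<le> size (image_mset (\<lambda>r. int (Lctx.kk a g0 r)) T)" using mk by simp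
    then obtain s where s: "s \<in> sigs (image_mset (\<lambda>r. int (Lctx.kk a g0 r)) T)" "[s = 2 ^ k] (mod 2 ^ Suc k)"
      using comb1[of k] Tnz[OF g0] by blast
    show "n \<notin> E_star a" using Lctx.construct[OF L[OF g0], of s] s mk unfolding T_def by simp
  qed
  have part2: "n \<in> E_star a \<longleftrightarrow>
                 (\<exists>e::int. odd e \<and>
                    (\<forall>r \<in># T.
                       \<exists>e'::nat. [r = g ^ e'] (mod a) \<and>
                          ([int e' = e] (mod 2 ^ m) \<or> [int e' = - e] (mod 2 ^ m))))"
    if g: "residue_primroot a g" and sz: "size T = 2 ^ (m - 1) - 1" for g
  proof
    assume nE: "n \<in> E_star a"
    show "\<exists>e::int. odd e \<and> (\<forall>r \<in># T. \<exists>e'::nat. [r = g ^ e'] (mod a) \<and>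
                          ([int e' = e] (mod 2 ^ m) \<or> [int e' = - e] (mod 2 ^ m)))"
    proof (rule ccontr)
      assume ne: "\<not> (\<exists>e::int. odd e \<and> (\<forall>r \<in># T. \<exists>e'::nat. [r = g ^ e'] (mod a) \<and>
                          ([int e' = e] (mod 2 ^ m) \<or> [int e' = - e] (mod 2 ^ m))))"
      have "\<not> (\<exists>e. odd e \<and> (\<forall>x\<in>#image_mset (\<lambda>r. int (Lctx.kk a g r)) T.
                [x = e] (mod 2 ^ Suc k) \<or> [x = - e] (mod 2 ^ Suc k)))"
      proof
        assume "\<exists>e. odd e \<and> (\<forall>x\<in>#image_mset (\<lambda>r. int (Lctx.kk a g r)) T.
                [x = e] (mod 2 ^ Suc k) \<or> [x = - e] (mod 2 ^ Suc k))"
        then obtain e where e: "odd e" "\<forall>x\<in>#image_mset (\<lambda>r. int (Lctx.kk a g r)) T.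
                [x = e] (mod 2 ^ Suc k) \<or> [x = - e] (mod 2 ^ Suc k)" by blast
        have "\<forall>r \<in># T. \<exists>e'::nat. [r = g ^ e'] (mod a) \<and>
                          ([int e' = e] (mod 2 ^ m) \<or> [int e' = - e] (mod 2 ^ m))"
        proof
          fix r assume r: "r \<in># T"
          hence rP: "r \<in># prime_factorization n" unfolding T_def by simp
          have "[r = g ^ Lctx.kk a g r] (mod a)"
            using Lctx.kk_prop[OF L[OF g] Lctx.P_cop[OF L[OF g] rP]] .
          moreover have "[int (Lctx.kk a g r) = e] (mod 2 ^ m) \<or> [int (Lctx.kk a g r) = - e] (mod 2 ^ m)"
            using e(2) r mk by simp
          ultimately show "\<exists>e'::nat. [r = g ^ e'] (mod a) \<and>
                          ([int e' = e] (mod 2 ^ m) \<or> [int e' = - e] (mod 2 ^ m))" by blast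
        qed
        thus False using ne e(1) by blast
      qed
      moreover have "2 ^ k \<le> size (image_mset (\<lambda>r. int (Lctx.kk a g r)) T) + 1" using sz mk by simp
      ultimately obtain s where s: "s \<in> sigs (image_mset (\<lambda>r. int (Lctx.kk a g r)) T)" "[s = 2 ^ k] (mod 2 ^ Suc k)"
        using comb2[of k] Tnz[OF g] by blast
      have "n \<notin> E_star a" using Lctx.construct[OF L[OF g], of s] s mk unfolding T_def by simp
      thus False using nE by blast
    qed
  next
    assume "\<exists>e::int. odd e \<and> (\<forall>r \<in># T. \<exists>e'::nat. [r = g ^ e'] (mod a) \<and>
                          ([int e' = e] (mod 2 ^ m) \<or> [int e' = - e] (mod 2 ^ m)))"
    then obtain e :: int where e: "odd e" "\<forall>r \<in># T. \<exists>e'::nat. [r = g ^ e'] (mod a) \<and>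
                          ([int e' = e] (mod 2 ^ m) \<or> [int e' = - e] (mod 2 ^ m))" by blast
    have pm: "\<forall>r\<in>#T. [int (Lctx.kk a g r) = e] (mod 2 ^ m) \<or> [int (Lctx.kk a g r) = - e] (mod 2 ^ m)"
    proof
      fix r assume r: "r \<in># T"
      hence rP: "r \<in># prime_factorization n" unfolding T_def by simp
      obtain e' where e': "[r = g ^ e'] (mod a)" "[int e' = e] (mod 2 ^ m) \<or> [int e' = - e] (mod 2 ^ m)"
        using e(2) r by blast
      have "[r = g ^ Lctx.kk a g r] (mod a)"
        using Lctx.kk_prop[OF L[OF g] Lctx.P_cop[OF L[OF g] rP]] .
      hence "[g ^ Lctx.kk a g r = g ^ e'] (mod a)" using e'(1) by (metis cong_sym cong_trans)
      hence "[int (Lctx.kk a g r) = int e'] (mod int (totient a))" using Lctx.gexp_cong[OF L[OF g]] by blast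
      moreover have "(2::int) ^ m dvd int (totient a)" using assms(5) by simp
      ultimately have "[int (Lctx.kk a g r) = int e'] (mod 2 ^ m)" by (rule cong_dvd_modulus)
      thus "[int (Lctx.kk a g r) = e] (mod 2 ^ m) \<or> [int (Lctx.kk a g r) = - e] (mod 2 ^ m)"
        using e'(2) by (metis cong_trans)
    qed
    have "size T < 2 ^ (m - 1)" using sz by simp
    thus "n \<in> E_star a" using Lctx.block[OF L[OF g] e(1)] pm unfolding T_def by blast
  qed
  show ?thesis using part1 part2 unfolding T_def by blast
qed

end
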